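(* Let $(U(s,t))_{s\le t,\ s,t\in\mathbb{R}}$ be the evolution system of a Markov process on $\mathbb{R}^d$, with right generators $A_r^+$ and left generators $A_s^-$. Fix $s\in\mathbb{R}$ and let $f\in\mathcal{D}(A_s^+)$ be such that for some $\delta>0$ we have $f\in\bigcap_{r\in(s-\delta,s]}\mathcal{D}(A_r^+)$. Assume \[\lim_{h\downarrow 0}\ \sup_{r\in(s-\delta,s]}\left\|\frac{U(r,r+h)f-f}{h}-A_r^+f\right\|_\infty=0\] and \[\lim_{h\downarrow 0}\|A_{s-h}^+f-A_s^+f\|_\infty=0.\] Then $f\in\mathcal{D}(A_s^-)$ and $A_s^+f=A_s^-f$.
   Context: Let $(X_t)_{t\in\mathbb{R}}$ be an $\mathbb{R}^d$-valued (time-inhomogeneous) Markov process. Its evolution system is $U(s,t)f(x):=\mathbb{E}(f(X_t)\mid X_s=x)$ for $s\le t$, $f$ bounded Borel; it satisfies $U(s,s)=\mathrm{id}$, $U(s,t)=U(s,r)U(r,t)$ for $s\le r\le t$, positivity and $U(s,t)1=1$. $\|\cdot\|_\infty$ is the uniform norm and $C_\infty(\mathbb{R}^d)$ the continuous functions vanishing at infinity. The right generator at time $s$ is $A_s^+f:=\lim_{h\downarrow0}\frac{U(s,s+h)f-f}{h}$, defined on $\mathcal{D}(A_s^+)$, the set of $f\in C_\infty(\mathbb{R}^d)$ for which this limit exists in $\|\cdot\|_\infty$. The left generator is $A_s^-f:=\lim_{h\downarrow0}\frac{U(s-h,s)f-f}{h}$ on the set $\mathcal{D}(A_s^-)$ of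 $f\in C_\infty(\mathbb{R}^d)$ where this limit exists in $\|\cdot\|_\infty$. *)

theory Defs
  imports "HOL-Analysis.Analysis"
begin

definition bounded_borel :: "('a::euclidean_space \<Rightarrow> real) \<Rightarrow> bool" where
  "bounded_borel f \<longleftrightarrow> bounded (range f) \<and> f \<in> borel_measurable borel"

definition evolution_system ::
  "(real \<Rightarrow> real \<Rightarrow> ('a::euclidean_space \<Rightarrow> real) \<Rightarrow> ('a \<Rightarrow> real)) \<Rightarrow> bool" where
  "evolution_system U \<longleftrightarrow>
     (\<forall>s t f. s \<le> t \<longrightarrow> bounded_borel f \<longrightarrow> bounded_borel (U s t f)) \<and>
     (\<forall>s f. bounded_borel f \<longrightarrow> U s s f = f) \<and>
     (\<forall>s r t f. s \<le> r \<longrightarrow> r \<le> t \<longrightarrow> bounded_borel f \<longrightarrow> U s t f = U s r (U r t f)) \<and>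
     (\<forall>s t f g a b. s \<le> t \<longrightarrow> bounded_borel f \<longrightarrow> bounded_borel g \<longrightarrow>
        U s t (\<lambda>x. a * f x + b * g x) = (\<lambda>x. a * U s t f x + b * U s t g x)) \<and>
     (\<forall>s t f. s \<le> t \<longrightarrow> bounded_borel f \<longrightarrow> (\<forall>x. f x \<ge> 0) \<longrightarrow> (\<forall>x. U s t f x \<ge> 0)) \<and>
     (\<forall>s t. s \<le> t \<longrightarrow> U s t (\<lambda>_. 1) = (\<lambda>_. 1))"

definition C_infty :: "('a::euclidean_space \<Rightarrow> real) set" where
  "C_infty = {f. continuous_on UNIV f \<and> (f \<longlongrightarrow> 0) at_infinity}"

text \<open>Limits in the uniform norm are expressed via uniform_limit over UNIV.\<close>
definition has_right_gen where
  "has_right_gen U s f g \<longleftrightarrow> f \<in> C_infty \<and>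
     uniform_limit UNIV (\<lambda>h x. (U s (s + h) f x - f x) / h) g (at_right 0)"

definition has_left_gen where
  "has_left_gen U s f g \<longleftrightarrow> f \<in> C_infty \<and>
     uniform_limit UNIV (\<lambda>h x. (U (s - h) s f x - f x) / h) g (at_right 0)"

definition dom_right_gen where "dom_right_gen U s = {f. \<exists>g. has_right_gen U s f g}"
definition dom_left_gen where "dom_left_gen U s = {f. \<exists>g. has_left_gen U s f g}"

definition right_gen where "right_gen U s f = (THE g. has_right_gen U s f g)"
definition left_gen where "left_gen U s f = (THE g. has_left_gen U s f g)"

end

theory Submission
  imports Defs
begin

lemma left_gen_unique:
  assumes "has_left_gen U s f g" "has_left_gen U s f g'"
  shows "g = g'"
proof
  fix x
  have "((\<lambda>h. (U (s - h) s f x - f x) / h) \<longlongrightarrow> g x) (at_right 0)"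
    using tendsto_uniform_limitI[OF conjunct2[OF assms(1)[unfolded has_left_gen_def]] UNIV_I] by simp
  moreover have "((\<lambda>h. (U (s - h) s f x - f x) / h) \<longlongrightarrow> g' x) (at_right 0)"
    using tendsto_uniform_limitI[OF conjunct2[OF assms(2)[unfolded has_left_gen_def]] UNIV_I] by simp
  ultimately show "g x = g' x" by (rule tendsto_unique[rotated]) simp
qed

theorem lemma2p2:
  fixes U :: "real \<Rightarrow> real \<Rightarrow> (real ^ 'd \<Rightarrow> real) \<Rightarrow> (real ^ 'd \<Rightarrow> real)"
    and s \<delta> :: real and f :: "real ^ 'd \<Rightarrow> real"
  assumes "evolution_system U"
    and "f \<in> dom_right_gen U s"
    and "\<delta> > 0"
    and "\<forall>r\<in>{s - \<delta><..s}. f \<in> dom_right_gen U r"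
    and "uniform_limit ({s - \<delta><..s} \<times> UNIV)
           (\<lambda>h (r, x). (U r (r + h) f x - f x) / h) (\<lambda>(r, x). right_gen U r f x) (at_right 0)"
    and "uniform_limit UNIV (\<lambda>h. right_gen U (s - h) f) (right_gen U s f) (at_right 0)"
  shows "f \<in> dom_left_gen U s \<and> right_gen U s f = left_gen U s f"
proof -
  have fC: "f \<in> C_infty" using assms(2) unfolding dom_right_gen_def has_right_gen_def by auto
  have UL: "uniform_limit UNIV (\<lambda>h x. (U (s - h) s f x - f x) / h) (right_gen U s f) (at_right 0)"
    unfolding uniform_limit_iff
  proof (intro allI impI)
    fix e :: real assume e: "e > 0"
    have e2: "e/2 > 0" using e by simp
    have E1: "\<forall>\<^sub>F h in at_right 0. \<forall>p\<in>{s - \<delta><..s} \<times> UNIV.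
        dist ((\<lambda>(r, x). (U r (r + h) f x - f x) / h) p) ((\<lambda>(r, x). right_gen U r f x) p) < e/2"
      using assms(5) e2 unfolding uniform_limit_iff by blast
    have E2: "\<forall>\<^sub>F h in at_right 0. \<forall>x\<in>UNIV. dist (right_gen U (s - h) f x) (right_gen U s f x) < e/2"
      using assms(6) e2 unfolding uniform_limit_iff by blast
    have E3: "\<forall>\<^sub>F h in at_right (0::real). 0 < h \<and> h < \<delta>"
      using eventually_at_right_real[OF assms(3)] by (rule eventually_mono) simp
    show "\<forall>\<^sub>F h in at_right 0. \<forall>x\<in>UNIV. dist ((U (s - h) s f x - f x) / h) (right_gen U s f x) < e"
      using E1 E2 E3
    proof eventually_elim
      case (elim h)
      show ?case
      proof
        fix x :: "real^'d"
        have "(s - h, x) \<in> {s - \<delta><..s} \<times> UNIV" using elim(3) by auto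
        from elim(1)[rule_format, OF this] have a: "dist ((U (s - h) s f x - f x) / h) (right_gen U (s - h) f x) < e/2"
          by simp
        have b: "dist (right_gen U (s - h) f x) (right_gen U s f x) < e/2" using elim(2) by auto
        show "dist ((U (s - h) s f x - f x) / h) (right_gen U s f x) < e"
          using a b dist_triangle[of "(U (s - h) s f x - f x) / h" "right_gen U s f x" "right_gen U (s - h) f x"] by linarith
      qed
    qed
  qed
  have H: "has_left_gen U s f (right_gen U s f)"
    unfolding has_left_gen_def using fC UL by simp
  have "left_gen U s f = right_gen U s f"
    unfolding left_gen_def
    apply (rule the_equality)
     apply (rule H)
    apply (rule left_gen_unique[OF _ H])
    apply assumption
    done
  then show ?thesis using H unfolding dom_left_gen_def by auto
qed

end
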